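(* Let $\lambda,\mu$ be strict partitions with $\mu\subseteq\lambda$. If the shifted skew diagram $\widetilde{\lambda/\mu}$ contains the three boxes $(i,j)$, $(i,j+1)$ and $(i+1,j+1)$ for some $i,j$, then $Q_{\lambda/\mu}$ is not $p$-positive.
   Context: For strict partitions $\mu\subseteq\lambda$, the shifted skew diagram $\widetilde{\lambda/\mu}$ is the set of boxes $(r,c)$ with $1\le r\le\ell(\lambda)$ and $r+\mu_r\le c\le r+\lambda_r-1$; $(r,c)$ means row $r$ (rows numbered top to bottom), column $c$. Let $\mathbf{P}'=\{1'<1<2'<2<\cdots\}$. A marked shifted tableau of shape $\widetilde{\lambda/\mu}$ is a filling of its boxes by letters of $\mathbf{P}'$ with rows and columns weakly increasing, each column containing at most one unmarked $k$ and each row at most one marked $k'$ for each $k$; its content counts entries $a$ with $|a|=i$. $Q_{\lambda/\mu}=\sum_T x^{c(T)}$ over all such tableaux. A symmetric function is $p$-positive if its expansion in the power sum basis $\{p_\nu\}$ has all coefficients nonnegative. *)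

theory Defs
  imports Complex_Main
begin

definition partition :: "nat list \<Rightarrow> bool" where
  "partition l \<longleftrightarrow> sorted_wrt (\<ge>) l \<and> (\<forall>x\<in>set l. 0 < x)"

definition strict_partition :: "nat list \<Rightarrow> bool" where
  "strict_partition l \<longleftrightarrow> sorted_wrt (>) l \<and> (\<forall>x\<in>set l. 0 < x)"

definition part :: "nat list \<Rightarrow> nat \<Rightarrow> nat" where
  "part l r = (if 1 \<le> r \<and> r \<le> length l then l ! (r - 1) else 0)"

definition part_contained :: "nat list \<Rightarrow> nat list \<Rightarrow> bool" where
  "part_contained mu la \<longleftrightarrow> (\<forall>r. part mu r \<le> part la r)"

text \<open>Boxes (r,c): row r (top to bottom), column c, with
  1 \<le> r \<le> len(lambda) and r + mu_r \<le> c \<le> r + lambda_r - 1.\<close>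
definition shifted_skew :: "nat list \<Rightarrow> nat list \<Rightarrow> (nat \<times> nat) set" where
  "shifted_skew la mu = {(r, c). 1 \<le> r \<and> r \<le> length la \<and>
       r + part mu r \<le> c \<and> c + 1 \<le> r + part la r}"

text \<open>The alphabet 1' < 1 < 2' < 2 < ... is encoded by positive naturals:
  k' is encoded as 2k-1 and k as 2k. Thus the order is the order of nat,
  odd codes are marked letters and the absolute value |a| is (a+1) div 2.\<close>

definition letter_abs :: "nat \<Rightarrow> nat" where
  "letter_abs a = (a + 1) div 2"

definition letter_marked :: "nat \<Rightarrow> bool" where
  "letter_marked a \<longleftrightarrow> odd a"

definition marked_shifted_tableau ::
    "nat list \<Rightarrow> nat list \<Rightarrow> (nat \<times> nat \<Rightarrow> nat) \<Rightarrow> bool" where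
  "marked_shifted_tableau la mu T \<longleftrightarrow>
     (let D = shifted_skew la mu in
       (\<forall>b. b \<notin> D \<longrightarrow> T b = 0) \<and>
       (\<forall>b\<in>D. 1 \<le> T b) \<and>
       \<comment> \<open>rows weakly increasing\<close>
       (\<forall>r c c'. (r, c) \<in> D \<and> (r, c') \<in> D \<and> c \<le> c' \<longrightarrow> T (r, c) \<le> T (r, c')) \<and>
       \<comment> \<open>columns weakly increasing\<close>
       (\<forall>r r' c. (r, c) \<in> D \<and> (r', c) \<in> D \<and> r \<le> r' \<longrightarrow> T (r, c) \<le> T (r', c)) \<and>
       \<comment> \<open>each column has at most one unmarked k\<close>
       (\<forall>r r' c. (r, c) \<in> D \<and> (r', c) \<in> D \<and> r \<noteq> r' \<and>
            \<not> letter_marked (T (r, c)) \<longrightarrow> T (r, c) \<noteq> T (r', c)) \<and>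
       \<comment> \<open>each row has at most one marked k'\<close>
       (\<forall>r c c'. (r, c) \<in> D \<and> (r, c') \<in> D \<and> c \<noteq> c' \<and>
            letter_marked (T (r, c)) \<longrightarrow> T (r, c) \<noteq> T (r, c')))"

text \<open>A monomial x^alpha in the variables x_1, x_2, ... is given by a list
  alpha of exponents: alpha ! (i-1) is the exponent of x_i (0 beyond the length).\<close>
definition expo :: "nat list \<Rightarrow> nat \<Rightarrow> nat" where
  "expo alpha i = part alpha i"

definition Q_coeff :: "nat list \<Rightarrow> nat list \<Rightarrow> nat list \<Rightarrow> real" where
  "Q_coeff la mu alpha = real (card {T. marked_shifted_tableau la mu T \<and>
      (\<forall>i\<ge>1. card {b \<in> shifted_skew la mu. letter_abs (T b) = i} = expo alpha i)})"

text \<open>Coefficient of x^alpha in the power sum p_nu = prod_j (sum_i x_i^(nu_j)):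
  the number of ways to assign to each part nu_j a variable index g_j \<ge> 1
  such that the parts assigned to x_i sum to alpha_i.\<close>
definition p_coeff :: "nat list \<Rightarrow> nat list \<Rightarrow> real" where
  "p_coeff nu alpha = real (card {g :: nat list. length g = length nu \<and> (\<forall>k\<in>set g. 1 \<le> k) \<and>
      (\<forall>i\<ge>1. (\<Sum>j | j < length nu \<and> g ! j = i. nu ! j) = expo alpha i)})"

text \<open>A symmetric function (given by its monomial coefficients) is p-positive
  if it is a finite linear combination of power sums p_nu with nonnegative
  coefficients (the expansion in the basis p_nu being unique).\<close>
definition p_positive :: "(nat list \<Rightarrow> real) \<Rightarrow> bool" where
  "p_positive f \<longleftrightarrow> (\<exists>S c. finite S \<and> (\<forall>nu\<in>S. partition nu) \<and> (\<forall>nu\<in>S. 0 \<le> c nu) \<and>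
      (\<forall>alpha. f alpha = (\<Sum>nu\<in>S. c nu * p_coeff nu alpha)))"

end

theory Submission
  imports Defs
begin

lemma part_le_sum: "part l r \<le> sum_list l"
  unfolding part_def using elem_le_sum_list[of "r - 1" l] by auto

lemma finite_D: "finite (shifted_skew la mu)"
proof -
  have "shifted_skew la mu \<subseteq> {..length la} \<times> {..length la + sum_list la}"
  proof
    fix x assume "x \<in> shifted_skew la mu"
    then obtain r c where x: "x = (r,c)" "r \<le> length la" "c + 1 \<le> r + part la r"
      unfolding shifted_skew_def by auto
    thus "x \<in> {..length la} \<times> {..length la + sum_list la}"
      using part_le_sum[of la r] by auto
  qed
  then show ?thesis by (rule finite_subset) auto
qed

lemma Q_single_zero:
  assumes "(i, j) \<in> shifted_skew la mu"
    and "(i, j + 1) \<in> shifted_skew la mu"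
    and "(i + 1, j + 1) \<in> shifted_skew la mu"
  shows "Q_coeff la mu [m] = 0"
proof -
  let ?D = "shifted_skew la mu"
  have E: "{T. marked_shifted_tableau la mu T \<and>
      (\<forall>i\<ge>1. card {b \<in> ?D. letter_abs (T b) = i} = expo [m] i)} = {}"
  proof (rule ccontr)
    assume "\<not> ?thesis"
    then obtain T where tab: "marked_shifted_tableau la mu T"
      and cont: "\<forall>i\<ge>1. card {b \<in> ?D. letter_abs (T b) = i} = expo [m] i" by auto
    have small: "T b \<in> {1,2}" if "b \<in> ?D" for b
    proof -
      have ge: "1 \<le> T b" using tab that unfolding marked_shifted_tableau_def Let_def by auto
      let ?k = "letter_abs (T b)"
      have k1: "?k \<ge> 1" using ge unfolding letter_abs_def by auto
      have "card {b' \<in> ?D. letter_abs (T b') = ?k} \<noteq> 0"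
      proof -
        have "b \<in> {b' \<in> ?D. letter_abs (T b') = ?k}" using that by simp
        moreover have "finite {b' \<in> ?D. letter_abs (T b') = ?k}"
          using finite_D[of la mu] by simp
        ultimately show ?thesis using card_0_eq by blast
      qed
      hence "expo [m] ?k \<noteq> 0" using cont k1 by metis
      hence "?k = 1" using k1 unfolding expo_def part_def by (auto split: if_splits)
      thus ?thesis using ge unfolding letter_abs_def by auto
    qed
    have col: "T (i, j+1) \<le> T (i+1, j+1)" and
      colu: "\<not> letter_marked (T (i, j+1)) \<Longrightarrow> T (i, j+1) \<noteq> T (i+1, j+1)" and
      row: "T (i, j) \<le> T (i, j+1)" and
      rowm: "letter_marked (T (i, j)) \<Longrightarrow> T (i, j) \<noteq> T (i, j+1)"
      using tab assms unfolding marked_shifted_tableau_def Let_def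
      by (auto dest!: spec[of _ i] spec[of _ "i+1"] spec[of _ j] spec[of _ "j+1"])
    show False using small[OF assms(1)] small[OF assms(2)] small[OF assms(3)] col colu row rowm
      unfolding letter_marked_def by auto
  qed
  show ?thesis unfolding Q_coeff_def E by simp
qed

lemma p_single_one:
  assumes "partition nu"
  shows "p_coeff nu [sum_list nu] = 1"
proof -
  let ?G = "{g :: nat list. length g = length nu \<and> (\<forall>k\<in>set g. 1 \<le> k) \<and>
      (\<forall>i\<ge>1. (\<Sum>j | j < length nu \<and> g ! j = i. nu ! j) = expo [sum_list nu] i)}"
  have pos: "\<And>j. j < length nu \<Longrightarrow> 0 < nu ! j"
    using assms unfolding partition_def by auto
  have "?G = {replicate (length nu) 1}"
  proof
    show "{replicate (length nu) 1} \<subseteq> ?G"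
    proof -
      have "(\<Sum>j | j < length nu \<and> replicate (length nu) 1 ! j = i. nu ! j) = expo [sum_list nu] i"
        if "i \<ge> 1" for i :: nat
      proof (cases "i = 1")
        case True
        have "{j. j < length nu \<and> replicate (length nu) (1::nat) ! j = i} = {0..<length nu}"
          using True by auto
        thus ?thesis using True by (simp add: expo_def part_def sum_list_sum_nth)
      next
        case False
        hence "{j. j < length nu \<and> replicate (length nu) (1::nat) ! j = i} = {}" by auto
        hence "(\<Sum>j | j < length nu \<and> replicate (length nu) 1 ! j = i. nu ! j) = 0"
          by (simp only:) simp
        thus ?thesis using False that by (simp add: expo_def part_def)
      qed
      thus ?thesis by auto
    qed
  next
    show "?G \<subseteq> {replicate (length nu) 1}"
    proof
      fix g assume g: "g \<in> ?G"
      have "g ! j = 1" if j: "j < length g" for j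
      proof (rule ccontr)
        assume ne: "g ! j \<noteq> 1"
        have ge: "g ! j \<ge> 1" using g j nth_mem[OF j] by auto
        have "(\<Sum>j' | j' < length nu \<and> g ! j' = g ! j. nu ! j') = expo [sum_list nu] (g ! j)"
          using g ge by auto
        also have "\<dots> = 0" using ne ge by (simp add: expo_def part_def)
        finally have z: "(\<Sum>j' | j' < length nu \<and> g ! j' = g ! j. nu ! j') = 0" .
        have "j \<in> {j'. j' < length nu \<and> g ! j' = g ! j}" using g j by auto
        moreover have "finite {j'. j' < length nu \<and> g ! j' = g ! j}" by simp
        ultimately have "nu ! j = 0" using z by simp
        thus False using pos[of j] g j by auto
      qed
      hence "g = replicate (length nu) 1" using g by (intro nth_equalityI) auto
      thus "g \<in> {replicate (length nu) 1}" by simp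
    qed
  qed
  thus ?thesis unfolding p_coeff_def by simp
qed

lemma tab_zero: "marked_shifted_tableau la mu T \<Longrightarrow> b \<notin> shifted_skew la mu \<Longrightarrow> T b = 0"
  unfolding marked_shifted_tableau_def Let_def by blast

lemma tab_pos: "marked_shifted_tableau la mu T \<Longrightarrow> b \<in> shifted_skew la mu \<Longrightarrow> 1 \<le> T b"
  unfolding marked_shifted_tableau_def Let_def by blast

lemma D_bound:
  assumes "b \<in> shifted_skew la mu"
  shows "fst b + snd b < length la + length la + sum_list la + 1"
proof -
  obtain r c where x: "b = (r,c)" "r \<le> length la" "c + 1 \<le> r + part la r"
    using assms unfolding shifted_skew_def by auto
  thus ?thesis using part_le_sum[of la r] by auto
qed

lemma Q_nonzero:
  assumes "b0 \<in> shifted_skew la mu"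
  shows "\<exists>alpha. Q_coeff la mu alpha \<noteq> 0"
proof -
  let ?D = "shifted_skew la mu"
  define K where "K = length la + length la + sum_list la + 1"
  define alpha where "alpha = map (\<lambda>i. card {b\<in>?D. fst b + snd b = i}) [1..<K]"
  have expo_a: "expo alpha i = card {b\<in>?D. fst b + snd b = i}" if "i \<ge> 1" for i
  proof (cases "i < K")
    case True
    thus ?thesis using that unfolding alpha_def expo_def part_def by auto
  next
    case False
    hence E: "{b\<in>?D. fst b + snd b = i} = {}" using D_bound[of _ la mu] unfolding K_def by force
    have "expo alpha i = 0" using False that unfolding alpha_def expo_def part_def by auto
    thus ?thesis unfolding E by simp
  qed
  define T0 where "T0 = (\<lambda>b. if b \<in> ?D then 2 * (fst b + snd b) else 0)"
  have D1: "\<And>r c. (r,c) \<in> ?D \<Longrightarrow> 1 \<le> r" unfolding shifted_skew_def by auto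
  have tab0: "marked_shifted_tableau la mu T0"
    unfolding marked_shifted_tableau_def Let_def letter_marked_def
  proof (intro conjI allI impI ballI)
    fix r c c' assume "(r, c) \<in> ?D \<and> (r, c') \<in> ?D \<and> c \<le> c'"
    thus "T0 (r, c) \<le> T0 (r, c')" unfolding T0_def by simp
  next
    fix r r' c assume "(r, c) \<in> ?D \<and> (r', c) \<in> ?D \<and> r \<le> r'"
    thus "T0 (r, c) \<le> T0 (r', c)" unfolding T0_def by simp
  next
    fix r r' c assume "(r, c) \<in> ?D \<and> (r', c) \<in> ?D \<and> r \<noteq> r' \<and> \<not> odd (T0 (r, c))"
    thus "T0 (r, c) \<noteq> T0 (r', c)" unfolding T0_def by simp
  next
    fix r c c' assume "(r, c) \<in> ?D \<and> (r, c') \<in> ?D \<and> c \<noteq> c' \<and> odd (T0 (r, c))"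
    thus "T0 (r, c) \<noteq> T0 (r, c')" unfolding T0_def by simp
  next
    fix b assume "b \<notin> ?D" thus "T0 b = 0" unfolding T0_def by simp
  next
    fix b assume "b \<in> ?D" thus "1 \<le> T0 b" unfolding T0_def using D1[of "fst b" "snd b"] by simp
  qed
  have abs0: "letter_abs (T0 b) = fst b + snd b" if "b \<in> ?D" for b
    using that unfolding T0_def letter_abs_def by simp
  let ?X = "{T. marked_shifted_tableau la mu T \<and>
      (\<forall>i\<ge>1. card {b \<in> ?D. letter_abs (T b) = i} = expo alpha i)}"
  have "\<forall>i\<ge>1. card {b \<in> ?D. letter_abs (T0 b) = i} = expo alpha i"
  proof (intro allI impI)
    fix i :: nat assume "i \<ge> 1"
    have "{b \<in> ?D. letter_abs (T0 b) = i} = {b\<in>?D. fst b + snd b = i}" using abs0 by auto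
    thus "card {b \<in> ?D. letter_abs (T0 b) = i} = expo alpha i" using expo_a[OF \<open>i \<ge> 1\<close>] by simp
  qed
  hence inX: "T0 \<in> ?X" using tab0 by simp
  have "?X \<subseteq> {f. \<forall>x. (x \<in> ?D \<longrightarrow> f x \<in> {..<2*K}) \<and> (x \<notin> ?D \<longrightarrow> f x = 0)}"
  proof
    fix T assume T: "T \<in> ?X"
    have "T x < 2*K" if x: "x \<in> ?D" for x
    proof -
      let ?i = "letter_abs (T x)"
      have ge: "1 \<le> T x" using T x tab_pos by blast
      have i1: "?i \<ge> 1" using ge unfolding letter_abs_def by auto
      have "card {b' \<in> ?D. letter_abs (T b') = ?i} \<noteq> 0"
      proof -
        have "x \<in> {b' \<in> ?D. letter_abs (T b') = ?i}" using x by simp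
        moreover have "finite {b' \<in> ?D. letter_abs (T b') = ?i}"
          using finite_D[of la mu] by simp
        ultimately show ?thesis using card_0_eq by blast
      qed
      hence "expo alpha ?i \<noteq> 0" using T i1 by auto
      hence "?i \<le> length alpha" unfolding expo_def part_def by (auto split: if_splits)
      moreover have "length alpha = K - 1" unfolding alpha_def by simp
      moreover have "K \<ge> 1" unfolding K_def by simp
      ultimately have "?i < K" by linarith
      thus ?thesis unfolding letter_abs_def by linarith
    qed
    thus "T \<in> {f. \<forall>x. (x \<in> ?D \<longrightarrow> f x \<in> {..<2*K}) \<and> (x \<notin> ?D \<longrightarrow> f x = 0)}"
      using T tab_zero by blast
  qed
  hence fin: "finite ?X"
    by (rule finite_subset) (rule finite_set_of_finite_funs[OF finite_D], simp)
  have "card ?X \<noteq> 0" using fin inX card_0_eq by blast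
  hence "Q_coeff la mu alpha \<noteq> 0" unfolding Q_coeff_def by simp
  thus ?thesis by blast
qed

theorem mainTheorem8:
  fixes la mu :: "nat list" and i j :: nat
  assumes "strict_partition la" and "strict_partition mu"
    and "part_contained mu la"
    and "(i, j) \<in> shifted_skew la mu"
    and "(i, j + 1) \<in> shifted_skew la mu"
    and "(i + 1, j + 1) \<in> shifted_skew la mu"
  shows "\<not> p_positive (Q_coeff la mu)"
proof
  assume "p_positive (Q_coeff la mu)"
  then obtain S c where S: "finite S" "\<forall>nu\<in>S. partition nu" "\<forall>nu\<in>S. 0 \<le> c nu"
    and eq: "\<forall>alpha. Q_coeff la mu alpha = (\<Sum>nu\<in>S. c nu * p_coeff nu alpha)"
    unfolding p_positive_def by blast
  have pnn: "\<And>nu alpha. 0 \<le> p_coeff nu alpha" unfolding p_coeff_def by simp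
  have c0: "c nu = 0" if nu: "nu \<in> S" for nu
  proof -
    have "Q_coeff la mu [sum_list nu] = (\<Sum>nu'\<in>S. c nu' * p_coeff nu' [sum_list nu])"
      using eq by blast
    hence "(\<Sum>nu'\<in>S. c nu' * p_coeff nu' [sum_list nu]) = 0"
      using Q_single_zero[OF assms(4,5,6)] by simp
    hence "\<forall>nu'\<in>S. c nu' * p_coeff nu' [sum_list nu] = 0"
    proof -
      have "\<And>x. x \<in> S \<Longrightarrow> 0 \<le> c x * p_coeff x [sum_list nu]"
        using S(3) pnn by (simp add: mult_nonneg_nonneg)
      from sum_nonneg_eq_0_iff[OF S(1) this] \<open>(\<Sum>nu'\<in>S. c nu' * p_coeff nu' [sum_list nu]) = 0\<close>
      show ?thesis by simp
    qed
    hence "c nu * p_coeff nu [sum_list nu] = 0" using nu by blast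
    thus ?thesis using p_single_one[of nu] S(2) nu by simp
  qed
  obtain alpha where "Q_coeff la mu alpha \<noteq> 0" using Q_nonzero[OF assms(4)] by blast
  moreover have "Q_coeff la mu alpha = 0"
  proof -
    have "Q_coeff la mu alpha = (\<Sum>nu\<in>S. c nu * p_coeff nu alpha)" using eq by blast
    also have "\<dots> = 0" by (rule sum.neutral) (simp add: c0)
    finally show ?thesis .
  qed
  ultimately show False by simp
qed

end
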